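(* Let $\Omega\subset\mathbb{R}^N$ be open and bounded, $\alpha\in(0,N)$, $q\in(1,\infty]$ with $q'=q/(q-1)$ ($q'=1$ if $q=\infty$), and let $f \in L^{N/\alpha,q}(\Omega)$. Suppose $\frac{1}{2}\left(N/\alpha+1\right) \leq p<N/\alpha$ and put $\delta_p:= N/p-\alpha>0$. Then $f \in L^{p,1}(\Omega)$, and there exists a constant $C_1=C_1(\alpha,N,q,\Omega)>0$ (independent of $p$ and $f$) such that \[ \|f\|_{L^{p,1}(\Omega)} \leq C_1\delta_p^{-1/q'} \|f\|_{L^{N/\alpha,q}(\Omega)}. \] Moreover, $C_1$ can be chosen such that $C_1\delta_p^{-1/q'} \geq 1$ for all such $p$.
   Context: For a measurable $f$ on $\mathbb{R}^N$ let $f^*$ be its non-increasing rearrangement and $f^{**}(x)=\frac1x\int_0^x f^*(t)\,dt$. For $1<p<\infty$ and $1\le q<\infty$, $\|f\|_{L^{p,q}(\mathbb{R}^N)} = (\int_0^\infty [t^{1/p}f^{**}(t)]^q\,\frac{dt}{t})^{1/q}$, and $\|f\|_{L^{p,\infty}(\mathbb{R}^N)}=\sup_{t>0}t^{1/p}f^{**}(t)$. For $f$ on $\Omega$, $\|f\|_{L^{p,q}(\Omega)}:=\|f\chi_\Omega\|_{L^{p,q}(\mathbb{R}^N)}$, and $L^{p,q}(\Omega)$ is the space of $f$ for which this is finite. *)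

theory Defs
  imports "HOL-Analysis.Analysis"
begin

text \<open>Real power of an extended nonnegative real, for positive exponents r.\<close>
definition enn_powr :: "ennreal \<Rightarrow> real \<Rightarrow> ennreal" where
  "enn_powr x r = (if x = \<infinity> then \<infinity> else ennreal (enn2real x powr r))"

text \<open>Non-increasing rearrangement f*(t) = inf{s \<ge> 0 : |{|f| > s}| \<le> t} (value \<infinity> if empty).\<close>
definition rearr :: "('a::euclidean_space \<Rightarrow> real) \<Rightarrow> real \<Rightarrow> ennreal" where
  "rearr f t = Inf {ennreal s | s. 0 \<le> s \<and> emeasure lebesgue {x. s < \<bar>f x\<bar>} \<le> ennreal t}"

definition maxrearr :: "('a::euclidean_space \<Rightarrow> real) \<Rightarrow> real \<Rightarrow> ennreal" where
  "maxrearr f t = (\<integral>\<^sup>+ s. rearr f s * indicator {0<..<t} s \<partial>lborel) / ennreal t"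

definition lorentz_norm :: "real \<Rightarrow> ennreal \<Rightarrow> ('a::euclidean_space \<Rightarrow> real) \<Rightarrow> ennreal" where
  "lorentz_norm p q f =
    (if q = \<infinity> then (SUP t\<in>{0<..}. ennreal (t powr (1/p)) * maxrearr f t)
     else enn_powr (\<integral>\<^sup>+ t. enn_powr (ennreal (t powr (1/p)) * maxrearr f t) (enn2real q)
                           / ennreal t * indicator {0<..} t \<partial>lborel) (1 / enn2real q))"

definition lorentz_norm_on :: "real \<Rightarrow> ennreal \<Rightarrow> 'a::euclidean_space set \<Rightarrow> ('a \<Rightarrow> real) \<Rightarrow> ennreal" where
  "lorentz_norm_on p q \<Omega> f = lorentz_norm p q (\<lambda>x. f x * indicator \<Omega> x)"

definition in_lorentz :: "real \<Rightarrow> ennreal \<Rightarrow> 'a::euclidean_space set \<Rightarrow> ('a \<Rightarrow> real) \<Rightarrow> bool" where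
  "in_lorentz p q \<Omega> f \<longleftrightarrow> (\<lambda>x. f x * indicator \<Omega> x) \<in> borel_measurable lebesgue
      \<and> lorentz_norm_on p q \<Omega> f < \<infinity>"

text \<open>1/q' where q' is the conjugate exponent of q \<in> (1,\<infinity>] (q' = 1 if q = \<infinity>).\<close>
definition inv_conj :: "ennreal \<Rightarrow> real" where
  "inv_conj q = (if q = \<infinity> then 1 else 1 - 1 / enn2real q)"

end

theory Submission
  imports Defs
begin

lemma mono_ennreal_meas:
  fixes f :: "real \<Rightarrow> ennreal"
  assumes "\<And>x y. x \<le> y \<Longrightarrow> f x \<le> f y"
  shows "f \<in> borel_measurable borel"
proof (rule borel_measurableI_greater)
  fix c
  have "is_interval {x. c < f x}"
    unfolding is_interval_1 using assms by (auto intro: less_le_trans)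
  then show "{x \<in> space borel. c < f x} \<in> sets borel"
    using real_interval_borel_measurable by simp
qed

lemma antimono_ennreal_meas:
  fixes f :: "real \<Rightarrow> ennreal"
  assumes "\<And>x y. x \<le> y \<Longrightarrow> f y \<le> f x"
  shows "f \<in> borel_measurable borel"
proof (rule borel_measurableI_greater)
  fix c
  have "is_interval {x. c < f x}"
    unfolding is_interval_1 using assms by (auto intro: less_le_trans)
  then show "{x \<in> space borel. c < f x} \<in> sets borel"
    using real_interval_borel_measurable by simp
qed

lemma rearr_antimono: "s \<le> t \<Longrightarrow> rearr g t \<le> rearr g s"
  unfolding rearr_def
  by (rule Inf_superset_mono) (smt (verit, ccfv_SIG) Collect_mono_iff ennreal_leI order_trans)

lemma rearr_meas: "rearr g \<in> borel_measurable borel"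
  by (rule antimono_ennreal_meas) (rule rearr_antimono)

lemma rearr_zero:
  assumes "{x. 0 < \<bar>g x\<bar>} \<subseteq> S" "S \<in> sets lebesgue" "emeasure lebesgue S \<le> ennreal M" "M \<le> t"
  shows "rearr g t = 0"
proof -
  have "emeasure lebesgue {x. 0 < \<bar>g x\<bar>} \<le> ennreal t"
    using emeasure_mono[OF assms(1,2)] assms(3,4) by (meson ennreal_leI order_trans)
  then have "ennreal 0 \<in> {ennreal s | s. 0 \<le> s \<and> emeasure lebesgue {x. s < \<bar>g x\<bar>} \<le> ennreal t}"
    by (intro CollectI exI[of _ 0]) simp
  then show ?thesis unfolding rearr_def
    by (metis (no_types, lifting) Inf_lower ennreal_0 le_zero_eq)
qed

lemma maxrearr_affine:
  assumes t: "0 < t"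
  shows "maxrearr g t = (\<integral>\<^sup>+ u. rearr g (t * u) * indicator {0<..<1} u \<partial>lborel)"
proof -
  have meas: "(\<lambda>s. rearr g s * indicator {0<..<t} s) \<in> borel_measurable borel"
    using rearr_meas by measurable
  have "(\<integral>\<^sup>+ s. rearr g s * indicator {0<..<t} s \<partial>lborel)
      = ennreal \<bar>t\<bar> * (\<integral>\<^sup>+ u. rearr g (0 + t * u) * indicator {0<..<t} (0 + t * u) \<partial>lborel)"
    using nn_integral_real_affine[OF meas, of t 0] t by simp
  also have "(\<lambda>u. rearr g (0 + t * u) * indicator {0<..<t} (0 + t * u))
      = (\<lambda>u. rearr g (t * u) * indicator {0<..<1} u)"
    using t by (auto simp: indicator_def zero_less_mult_iff fun_eq_iff)
  finally have "(\<integral>\<^sup>+ s. rearr g s * indicator {0<..<t} s \<partial>lborel)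
      = (\<integral>\<^sup>+ u. rearr g (t * u) * indicator {0<..<1} u \<partial>lborel) * ennreal t"
    using t by (simp add: mult.commute)
  then show ?thesis
    unfolding maxrearr_def using t
    by (simp add: ennreal_mult_divide_eq)
qed

lemma maxrearr_antimono:
  assumes "0 < s" "s \<le> t"
  shows "maxrearr g t \<le> maxrearr g s"
proof -
  have "rearr g (t * u) * indicator {0<..<1} u \<le> rearr g (s * u) * indicator {0<..<1} u" for u
  proof (cases "u \<in> {0<..<1}")
    case True
    then have "s * u \<le> t * u" using assms by (intro mult_right_mono) auto
    then show ?thesis using True by (simp add: rearr_antimono)
  qed simp
  then show ?thesis
    using assms by (simp add: maxrearr_affine nn_integral_mono)
qed

lemma Kfun_mono:
  "s \<le> t \<Longrightarrow> (\<integral>\<^sup>+ x. rearr g x * indicator {0<..<s} x \<partial>lborel)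
     \<le> (\<integral>\<^sup>+ x. rearr g x * indicator {0<..<t} x \<partial>lborel)"
  by (intro nn_integral_mono mult_left_mono) (auto simp: indicator_def)

lemma maxrearr_meas: "maxrearr g \<in> borel_measurable borel"
proof -
  have "(\<lambda>t. \<integral>\<^sup>+ x. rearr g x * indicator {0<..<t} x \<partial>lborel) \<in> borel_measurable borel"
    by (rule mono_ennreal_meas) (rule Kfun_mono)
  then show ?thesis unfolding maxrearr_def[abs_def] by measurable
qed

lemma maxrearr_tail:
  assumes "\<And>s. M \<le> s \<Longrightarrow> rearr g s = 0" "0 < M" "M \<le> t"
  shows "maxrearr g t * ennreal t = maxrearr g M * ennreal M"
proof -
  have "(\<integral>\<^sup>+ x. rearr g x * indicator {0<..<t} x \<partial>lborel)
       = (\<integral>\<^sup>+ x. rearr g x * indicator {0<..<M} x \<partial>lborel)"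
    by (rule nn_integral_cong) (use assms in \<open>auto simp: indicator_def\<close>)
  then show ?thesis
    unfolding maxrearr_def using assms
    by (simp add: ennreal_divide_times ennreal_divide_self)
qed

lemma nn_int_powr_0:
  fixes c M :: real
  assumes "0 < c" "0 \<le> M"
  shows "(\<integral>\<^sup>+ t. ennreal (if t \<in> {0..M} then t powr (c - 1) else 0) \<partial>lborel) = ennreal (M powr c / c)"
proof (rule nn_integral_has_integral_lborel)
  show "(\<lambda>t. if t \<in> {0..M} then t powr (c - 1) else 0) \<in> borel_measurable borel"
    by measurable
  show "0 \<le> (if t \<in> {0..M} then t powr (c - 1) else 0)" for t by simp
  have "((\<lambda>t. t powr (c - 1)) has_integral (M powr (c - 1 + 1) / (c - 1 + 1))) {0..M}"
    using assms by (intro has_integral_powr_from_0) auto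
  then show "((\<lambda>t. if t \<in> {0..M} then t powr (c - 1) else 0) has_integral (M powr c / c)) UNIV"
    by (subst has_integral_restrict_UNIV) simp
qed

lemma nn_int_powr_inf:
  fixes c M :: real
  assumes "0 < c" "0 < M"
  shows "(\<integral>\<^sup>+ t. ennreal (if t \<in> {M..} then t powr (- c - 1) else 0) \<partial>lborel) = ennreal (M powr (- c) / c)"
proof (rule nn_integral_has_integral_lborel)
  show "(\<lambda>t. if t \<in> {M..} then t powr (- c - 1) else 0) \<in> borel_measurable borel"
    by measurable
  show "0 \<le> (if t \<in> {M..} then t powr (- c - 1) else 0)" for t by simp
  have "((\<lambda>t. t powr (- c - 1)) has_integral (-(M powr (- c - 1 + 1)) / (- c - 1 + 1))) {M..}"
    using assms by (intro has_integral_powr_to_inf) auto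
  then show "((\<lambda>t. if t \<in> {M..} then t powr (- c - 1) else 0) has_integral (M powr (- c) / c)) UNIV"
    by (subst has_integral_restrict_UNIV) simp
qed


lemma tail_split:
  fixes \<phi> :: "real \<Rightarrow> real"
  assumes meas: "\<phi> \<in> borel_measurable borel" and nn: "\<And>t. 0 \<le> \<phi> t"
    and M: "0 < M" and tl: "\<And>t. M \<le> t \<Longrightarrow> \<phi> t * t = \<phi> M * M"
    and emb: "\<And>t. 0 < t \<Longrightarrow> t powr a * \<phi> t \<le> B"
    and b: "b < 1"
  shows "(\<integral>\<^sup>+t. ennreal (if 0 < t then t powr (b - 1) * \<phi> t else 0) \<partial>lborel)
    \<le> (\<integral>\<^sup>+t. ennreal (if t \<in> {0<..M} then t powr (b - 1) * \<phi> t else 0) \<partial>lborel)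
       + ennreal (B * M powr (1 - a) * (M powr (- (1 - b)) / (1 - b)))"
proof -
  have B0: "0 \<le> B" using emb[of 1] nn[of 1] by simp
  have pt: "ennreal (if 0 < t then t powr (b - 1) * \<phi> t else 0)
     \<le> ennreal (if t \<in> {0<..M} then t powr (b - 1) * \<phi> t else 0)
       + ennreal (B * M powr (1 - a)) * ennreal (if t \<in> {M..} then t powr (- (1 - b) - 1) else 0)" for t
  proof (cases "t \<in> {0<..M}")
    case True
    then show ?thesis by (auto simp: add_increasing2)
  next
    case False
    show ?thesis
    proof (cases "0 < t")
      case True
      with False have tM: "M < t" by auto
      have e1: "\<phi> t = \<phi> M * M / t" using tl[of t] tM M by (simp add: field_simps)
      have e2: "\<phi> M * M = (\<phi> M * M powr a) * M powr (1 - a)"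
        using M by (simp add: powr_diff field_simps)
      have e3: "\<phi> M * M \<le> B * M powr (1 - a)"
        unfolding e2 using emb[OF M] by (intro mult_right_mono) (auto simp: mult.commute)
      have e4: "t powr (b - 1) / t = t powr (- (1 - b) - 1)"
        using tM M by (simp add: powr_diff power2_eq_square)
      have "t powr (b - 1) * \<phi> t = (\<phi> M * M) * (t powr (b - 1) / t)"
        unfolding e1 by simp
      also have "\<dots> \<le> (B * M powr (1 - a)) * (t powr (b - 1) / t)"
        using e3 tM M by (intro mult_right_mono) auto
      finally have "t powr (b - 1) * \<phi> t \<le> B * M powr (1 - a) * t powr (- (1 - b) - 1)"
        unfolding e4 .
      then show ?thesis using False True tM B0
        by (simp add: ennreal_mult[symmetric] ennreal_leI)
    qed (use False in auto)
  qed
  have "(\<integral>\<^sup>+t. ennreal (if 0 < t then t powr (b - 1) * \<phi> t else 0) \<partial>lborel)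
     \<le> (\<integral>\<^sup>+t. ennreal (if t \<in> {0<..M} then t powr (b - 1) * \<phi> t else 0)
       + ennreal (B * M powr (1 - a)) * ennreal (if t \<in> {M..} then t powr (- (1 - b) - 1) else 0) \<partial>lborel)"
    by (intro nn_integral_mono pt)
  also have "\<dots> = (\<integral>\<^sup>+t. ennreal (if t \<in> {0<..M} then t powr (b - 1) * \<phi> t else 0) \<partial>lborel)
     + ennreal (B * M powr (1 - a)) * (\<integral>\<^sup>+t. ennreal (if t \<in> {M..} then t powr (- (1 - b) - 1) else 0) \<partial>lborel)"
    by (subst nn_integral_add) (use meas in \<open>auto simp: nn_integral_cmult\<close>)
  also have "(\<integral>\<^sup>+t. ennreal (if t \<in> {M..} then t powr (- (1 - b) - 1) else 0) \<partial>lborel)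
     = ennreal (M powr (- (1 - b)) / (1 - b))"
    using b M by (intro nn_int_powr_inf) auto
  finally show ?thesis using B0 b M by (simp add: ennreal_mult[symmetric] mult.assoc)
qed

lemma head_inf:
  fixes \<phi> :: "real \<Rightarrow> real"
  assumes nn: "\<And>t. 0 \<le> \<phi> t" and M: "0 < M"
    and emb: "\<And>t. 0 < t \<Longrightarrow> t powr a * \<phi> t \<le> B"
    and ab: "a < b"
  shows "(\<integral>\<^sup>+t. ennreal (if t \<in> {0<..M} then t powr (b - 1) * \<phi> t else 0) \<partial>lborel)
    \<le> ennreal (B * (M powr (b - a) / (b - a)))"
proof -
  have B0: "0 \<le> B" using emb[of 1] nn[of 1] by simp
  have pt: "ennreal (if t \<in> {0<..M} then t powr (b - 1) * \<phi> t else 0)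
     \<le> ennreal B * ennreal (if t \<in> {0..M} then t powr ((b - a) - 1) else 0)" for t
  proof (cases "t \<in> {0<..M}")
    case True
    then have t: "0 < t" by simp
    have "t powr (b - 1) * \<phi> t = t powr ((b - a) - 1) * (t powr a * \<phi> t)"
      using t by (simp add: powr_diff powr_add field_simps)
    also have "\<dots> \<le> t powr ((b - a) - 1) * B"
      using emb[OF t] by (intro mult_left_mono) auto
    finally show ?thesis using True B0
      by (simp add: ennreal_mult[symmetric] ennreal_leI mult.commute)
  qed auto
  have "(\<integral>\<^sup>+t. ennreal (if t \<in> {0<..M} then t powr (b - 1) * \<phi> t else 0) \<partial>lborel)
     \<le> (\<integral>\<^sup>+t. ennreal B * ennreal (if t \<in> {0..M} then t powr ((b - a) - 1) else 0) \<partial>lborel)"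
    by (intro nn_integral_mono pt)
  also have "\<dots> = ennreal B * ennreal (M powr (b - a) / (b - a))"
    using ab M nn_int_powr_0[of "b - a" M] by (subst nn_integral_cmult) auto
  finally show ?thesis using B0 ab by (simp add: ennreal_mult[symmetric])
qed


lemma embed_fin:
  fixes \<phi> :: "real \<Rightarrow> real"
  assumes nn: "\<And>t. 0 \<le> \<phi> t" and anti: "\<And>s t. 0 < s \<Longrightarrow> s \<le> t \<Longrightarrow> \<phi> t \<le> \<phi> s"
    and a: "0 < a" and q: "1 < q"
    and V: "(\<integral>\<^sup>+t. ennreal (if 0 < t then (t powr a * \<phi> t) powr q / t else 0) \<partial>lborel) = ennreal Vr"
    and Vr: "0 \<le> Vr" and t: "0 < t"
  shows "t powr a * \<phi> t \<le> (a * q) powr (1 / q) * Vr powr (1 / q)"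
proof -
  have pt: "ennreal (\<phi> t powr q) * ennreal (if s \<in> {0..t} then s powr (a * q - 1) else 0)
      \<le> ennreal (if 0 < s then (s powr a * \<phi> s) powr q / s else 0)" for s
  proof (cases "s \<in> {0<..t}")
    case True
    then have s: "0 < s" "s \<le> t" by auto
    have "\<phi> t powr q * s powr (a * q - 1) = (s powr a * \<phi> t) powr q / s"
      using s nn[of t] by (simp add: powr_mult powr_powr powr_diff mult.commute)
    also have "\<dots> \<le> (s powr a * \<phi> s) powr q / s"
      using s q nn anti[OF s] by (intro divide_right_mono powr_mono2 mult_left_mono) auto
    finally show ?thesis using s
      by (simp add: ennreal_mult[symmetric] ennreal_leI)
  next
    case False
    then show ?thesis by (cases "s = 0") auto
  qed
  have "ennreal (\<phi> t powr q) * ennreal (t powr (a * q) / (a * q))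
     = (\<integral>\<^sup>+s. ennreal (\<phi> t powr q) * ennreal (if s \<in> {0..t} then s powr (a * q - 1) else 0) \<partial>lborel)"
    using a q t nn_int_powr_0[of "a * q" t] by (subst nn_integral_cmult) auto
  also have "\<dots> \<le> ennreal Vr"
    unfolding V[symmetric] by (intro nn_integral_mono pt)
  finally have "\<phi> t powr q * (t powr (a * q) / (a * q)) \<le> Vr"
    using Vr a q t by (simp add: ennreal_mult[symmetric])
  then have "\<phi> t powr q * t powr (a * q) \<le> a * q * Vr"
    using a q by (simp add: field_simps)
  then have "(\<phi> t powr q * t powr (a * q)) powr (1 / q) \<le> (a * q * Vr) powr (1 / q)"
    using q nn[of t] by (intro powr_mono2) auto
  moreover have "(\<phi> t powr q * t powr (a * q)) powr (1 / q) = t powr a * \<phi> t"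
    using q nn[of t] t by (simp add: powr_mult powr_powr)
  moreover have "(a * q * Vr) powr (1 / q) = (a * q) powr (1 / q) * Vr powr (1 / q)"
    using a q Vr by (simp add: powr_mult)
  ultimately show ?thesis by simp
qed

lemma head_fin:
  fixes \<phi> :: "real \<Rightarrow> real"
  assumes meas: "\<phi> \<in> borel_measurable borel" and nn: "\<And>t. 0 \<le> \<phi> t" and M: "0 < M"
    and ab: "a < b" and q: "1 < q"
    and V: "(\<integral>\<^sup>+t. ennreal (if 0 < t then (t powr a * \<phi> t) powr q / t else 0) \<partial>lborel) = ennreal Vr"
    and Vr: "0 < Vr"
  shows "(\<integral>\<^sup>+t. ennreal (if t \<in> {0<..M} then t powr (b - 1) * \<phi> t else 0) \<partial>lborel)
    \<le> ennreal ((M powr ((b - a) * (q / (q - 1))) / ((b - a) * (q / (q - 1)))) powr (1 - 1 / q) * Vr powr (1 / q))"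
proof -
  define qq where "qq = q / (q - 1)"
  define U where "U = M powr ((b - a) * qq) / ((b - a) * qq)"
  define K where "K = U powr (1 / qq)"
  define Qr where "Qr = Vr powr (1 / q)"
  define c1 where "c1 = K * Qr / (qq * U)"
  define c2 where "c2 = K * Qr / (q * Vr)"
  have qq: "1 < qq" "1 / qq + 1 / q = 1" "1 / qq = 1 - 1 / q"
    using q by (auto simp: qq_def field_simps)
  have U: "0 < U" using M ab qq by (simp add: U_def)
  have K: "0 < K" using U by (simp add: K_def)
  have Qr: "0 < Qr" using Vr by (simp add: Qr_def)
  have c: "0 \<le> c1" "0 \<le> c2" using K Qr U Vr q qq by (auto simp: c1_def c2_def)
  have KU: "K powr qq = U" using U qq(1) by (simp add: K_def powr_powr)
  have QV: "Qr powr q = Vr" using Vr q by (simp add: Qr_def powr_powr)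
  have "c1 * U + c2 * Vr = K * Qr / qq + K * Qr / q"
    using U Vr qq q by (simp add: c1_def c2_def)
  also have "\<dots> = K * Qr * (1 / qq + 1 / q)" by (simp add: algebra_simps)
  finally have cUV: "c1 * U + c2 * Vr = K * Qr" using qq(2) by simp
  have pt: "ennreal (if t \<in> {0<..M} then t powr (b - 1) * \<phi> t else 0)
     \<le> ennreal c1 * ennreal (if t \<in> {0..M} then t powr ((b - a) * qq - 1) else 0)
       + ennreal c2 * ennreal (if 0 < t then (t powr a * \<phi> t) powr q / t else 0)" for t
  proof (cases "t \<in> {0<..M}")
    case True
    then have t: "0 < t" by simp
    define A where "A = t powr (b - a) / K"
    define B where "B = t powr a * \<phi> t / Qr"
    have A0: "0 \<le> A" "0 \<le> B" using K Qr nn[of t] by (auto simp: A_def B_def)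
    have y: "A * B \<le> A powr qq / qq + B powr q / q"
      using Youngs_inequality[OF qq(1) q qq(2) A0] .
    have Ap: "A powr qq = t powr ((b - a) * qq) / U"
      unfolding A_def using K t KU[symmetric] by (simp add: powr_divide powr_powr)
    have Bp: "B powr q = (t powr a * \<phi> t) powr q / Vr"
      unfolding B_def using Qr t nn[of t] QV[symmetric] by (simp add: powr_divide)
    have e1: "t powr (b - 1) * \<phi> t = K * Qr * (A * B) / t"
      unfolding A_def B_def using K Qr t
      by (simp add: powr_diff powr_add field_simps)
    also have "\<dots> \<le> K * Qr * (A powr qq / qq + B powr q / q) / t"
      using K Qr t y by (intro divide_right_mono mult_left_mono) auto
    also have "\<dots> = c1 * (t powr ((b - a) * qq) / t) + c2 * ((t powr a * \<phi> t) powr q / t)"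
      unfolding Ap Bp c1_def c2_def using U Vr qq q t by (simp add: field_simps)
    also have "t powr ((b - a) * qq) / t = t powr ((b - a) * qq - 1)"
      using t by (simp add: powr_diff)
    finally have "t powr (b - 1) * \<phi> t \<le> c1 * t powr ((b - a) * qq - 1) + c2 * ((t powr a * \<phi> t) powr q / t)" .
    then show ?thesis using True c
      by (simp add: ennreal_mult[symmetric] ennreal_plus[symmetric] del: ennreal_plus)
  qed (auto simp: add_increasing)
  have "(\<integral>\<^sup>+t. ennreal (if t \<in> {0<..M} then t powr (b - 1) * \<phi> t else 0) \<partial>lborel)
     \<le> (\<integral>\<^sup>+t. ennreal c1 * ennreal (if t \<in> {0..M} then t powr ((b - a) * qq - 1) else 0)
       + ennreal c2 * ennreal (if 0 < t then (t powr a * \<phi> t) powr q / t else 0) \<partial>lborel)"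
    by (intro nn_integral_mono pt)
  also have "\<dots> = ennreal c1 * (\<integral>\<^sup>+t. ennreal (if t \<in> {0..M} then t powr ((b - a) * qq - 1) else 0) \<partial>lborel)
       + ennreal c2 * (\<integral>\<^sup>+t. ennreal (if 0 < t then (t powr a * \<phi> t) powr q / t else 0) \<partial>lborel)"
    by (subst nn_integral_add) (use meas in \<open>auto simp: nn_integral_cmult\<close>)
  also have "(\<integral>\<^sup>+t. ennreal (if t \<in> {0..M} then t powr ((b - a) * qq - 1) else 0) \<partial>lborel) = ennreal U"
    unfolding U_def using nn_int_powr_0[of "(b - a) * qq" M] ab qq M by simp
  also note V
  also have "ennreal c1 * ennreal U + ennreal c2 * ennreal Vr = ennreal (K * Qr)"
    using c U Vr cUV
    by (simp add: ennreal_mult[symmetric] ennreal_plus[symmetric] del: ennreal_plus)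
  finally have fin: "(\<integral>\<^sup>+t. ennreal (if t \<in> {0<..M} then t powr (b - 1) * \<phi> t else 0) \<partial>lborel)
     \<le> ennreal (K * Qr)" .
  have e: "1 / (q / (q - 1)) = 1 - 1 / q" using qq(3) by (simp only: qq_def)
  show ?thesis using fin
    by (simp only: K_def Qr_def U_def qq_def e)
qed


lemma enn_powr_ennreal: "0 \<le> x \<Longrightarrow> enn_powr (ennreal x) c = ennreal (x powr c)"
  by (simp add: enn_powr_def)

lemma enn_powr_top: "enn_powr top c = top"
  by (simp add: enn_powr_def)

lemma F_fin:
  assumes fin: "lorentz_norm r q g < \<infinity>" and t: "0 < t"
  shows "maxrearr g t < \<infinity>"
proof (rule ccontr)
  assume "\<not> maxrearr g t < \<infinity>"
  then have Ft: "maxrearr g t = \<infinity>" by (simp add: less_top[symmetric])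
  have Fs: "maxrearr g s = \<infinity>" if "s \<in> {0<..<t}" for s
    using maxrearr_antimono[of s t g] that Ft by (simp add: top_unique)
  have prod: "ennreal (s powr (1 / r)) * maxrearr g s = \<infinity>" if "s \<in> {0<..<t}" for s
    using Fs[OF that] that by (simp add: ennreal_mult_top)
  show False
  proof (cases "q = \<infinity>")
    case True
    have "ennreal ((t/2) powr (1 / r)) * maxrearr g (t/2) \<le> lorentz_norm r q g"
      unfolding lorentz_norm_def using True t by (auto intro!: SUP_upper)
    then show False using prod[of "t/2"] t fin by simp
  next
    case False
    let ?h = "\<lambda>s. enn_powr (ennreal (s powr (1 / r)) * maxrearr g s) (enn2real q)
                           / ennreal s * indicator {0<..} s"
    have "(\<integral>\<^sup>+s. \<infinity> * indicator {0<..<t} s \<partial>lborel) \<le> (\<integral>\<^sup>+s. ?h s \<partial>lborel)"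
    proof (intro nn_integral_mono)
      fix s
      show "\<infinity> * indicator {0<..<t} s \<le> ?h s"
        by (cases "s \<in> {0<..<t}") (auto simp: prod enn_powr_top ennreal_top_divide)
    qed
    moreover have "(\<integral>\<^sup>+s. \<infinity> * indicator {0<..<t} s \<partial>lborel) = \<infinity>"
      using t by (simp add: nn_integral_cmult)
    ultimately have "(\<integral>\<^sup>+s. ?h s \<partial>lborel) = \<infinity>" by (simp add: top_unique)
    then have "lorentz_norm r q g = \<infinity>"
      unfolding lorentz_norm_def using False by (simp add: enn_powr_top)
    then show False using fin by simp
  qed
qed

lemma F_eq:
  assumes "lorentz_norm r q g < \<infinity>" "0 < t"
  shows "maxrearr g t = ennreal (enn2real (maxrearr g t))"
  using F_fin[OF assms] by simp

lemma norm_conv_fin: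
  assumes fin: "lorentz_norm r q g < \<infinity>" and q: "q \<noteq> \<infinity>"
  shows "lorentz_norm r q g = enn_powr (\<integral>\<^sup>+t. ennreal (if 0 < t then
      (t powr (1 / r) * enn2real (maxrearr g t)) powr (enn2real q) / t else 0) \<partial>lborel) (1 / enn2real q)"
proof -
  have "enn_powr (ennreal (t powr (1 / r)) * maxrearr g t) (enn2real q) / ennreal t * indicator {0<..} t
     = ennreal (if 0 < t then (t powr (1 / r) * enn2real (maxrearr g t)) powr (enn2real q) / t else 0)" for t
  proof (cases "0 < t")
    case True
    have "ennreal (t powr (1 / r)) * maxrearr g t = ennreal (t powr (1 / r) * enn2real (maxrearr g t))"
      by (subst F_eq[OF fin True]) (simp add: ennreal_mult)
    then show ?thesis using True
      by (simp add: enn_powr_ennreal divide_ennreal)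
  qed simp
  then show ?thesis unfolding lorentz_norm_def using q by simp
qed

lemma norm_conv_1:
  assumes fin: "lorentz_norm r q g < \<infinity>"
  shows "lorentz_norm p 1 g = enn_powr (\<integral>\<^sup>+t. ennreal (if 0 < t then
      t powr (1 / p - 1) * enn2real (maxrearr g t) else 0) \<partial>lborel) 1"
proof -
  have "enn_powr (ennreal (t powr (1 / p)) * maxrearr g t) 1 / ennreal t * indicator {0<..} t
     = ennreal (if 0 < t then t powr (1 / p - 1) * enn2real (maxrearr g t) else 0)" for t
  proof (cases "0 < t")
    case True
    have "ennreal (t powr (1 / p)) * maxrearr g t = ennreal (t powr (1 / p) * enn2real (maxrearr g t))"
      by (subst F_eq[OF fin True]) (simp add: ennreal_mult)
    moreover have "t powr (1 / p) * enn2real (maxrearr g t) / t = t powr (1 / p - 1) * enn2real (maxrearr g t)"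
      using True by (simp add: powr_diff)
    ultimately show ?thesis using True
      by (simp add: enn_powr_ennreal divide_ennreal)
  qed simp
  then show ?thesis unfolding lorentz_norm_def by simp
qed

lemma norm_conv_inf:
  assumes fin: "lorentz_norm r \<infinity> g < \<infinity>" and t: "0 < t"
  shows "t powr (1 / r) * enn2real (maxrearr g t) \<le> enn2real (lorentz_norm r \<infinity> g)"
proof -
  have "ennreal (t powr (1 / r)) * maxrearr g t \<le> lorentz_norm r \<infinity> g"
    unfolding lorentz_norm_def using t by (auto intro!: SUP_upper)
  then have "ennreal (t powr (1 / r) * enn2real (maxrearr g t)) \<le> lorentz_norm r \<infinity> g"
    by (subst (asm) F_eq[OF fin t]) (simp add: ennreal_mult)
  then have "enn2real (ennreal (t powr (1 / r) * enn2real (maxrearr g t))) \<le> enn2real (lorentz_norm r \<infinity> g)"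
    using fin by (intro enn2real_mono) auto
  then show ?thesis by simp
qed


lemma powr_le_max1:
  fixes x s :: real
  assumes "0 \<le> x" "0 \<le> s" "s \<le> 1"
  shows "x powr s \<le> max 1 x"
proof (cases "x \<le> 1")
  case True
  then have "x powr s \<le> 1 powr s" using assms by (intro powr_mono2) auto
  then show ?thesis by simp
next
  case False
  then have "x powr s \<le> x powr 1" using assms by (intro powr_mono) auto
  then show ?thesis using False by simp
qed

lemma basic_facts:
  fixes N \<alpha> p :: real
  assumes N: "0 < N" and al: "0 < \<alpha>" "\<alpha> < N"
    and p1: "(N / \<alpha> + 1) / 2 \<le> p" and p2: "p < N / \<alpha>"
  shows "0 < N / p - \<alpha>" "N / p - \<alpha> \<le> N / ((N / \<alpha> + 1) / 2) - \<alpha>"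
    "1 / p - 1 / (N / \<alpha>) = (N / p - \<alpha>) / N"
    "1 / (1 - 1 / p) \<le> (N / \<alpha> + 1) / (N / \<alpha> - 1)"
    "1 / (N / \<alpha>) < 1 / p" "1 / p < 1" "0 < 1 / (N / \<alpha>)" "1 < p"
proof -
  have r1: "1 < N / \<alpha>" using al by simp
  have p0: "1 < p" using r1 p1 by simp
  show "1 < p" by fact
  show "0 < N / p - \<alpha>" using p2 p0 al N by (simp add: field_simps)
  show "N / p - \<alpha> \<le> N / ((N / \<alpha> + 1) / 2) - \<alpha>"
    using p1 p0 N r1 by (intro diff_right_mono divide_left_mono) auto
  show "1 / p - 1 / (N / \<alpha>) = (N / p - \<alpha>) / N" using N p0 al by (simp add: field_simps)
  have "(N / \<alpha> - 1) / (N / \<alpha> + 1) \<le> 1 - 1 / p"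
  proof -
    have "1 / p \<le> 1 / ((N / \<alpha> + 1) / 2)" using p1 r1 by (intro divide_left_mono) auto
    also have "\<dots> = 1 - (N / \<alpha> - 1) / (N / \<alpha> + 1)" using r1 by (simp add: field_simps)
    finally show ?thesis by simp
  qed
  then have "1 / (1 - 1 / p) \<le> 1 / ((N / \<alpha> - 1) / (N / \<alpha> + 1))"
    using r1 p0 by (intro divide_left_mono) auto
  then show "1 / (1 - 1 / p) \<le> (N / \<alpha> + 1) / (N / \<alpha> - 1)"
    by simp
  show "1 / (N / \<alpha>) < 1 / p" using p2 p0 al N by (simp add: field_simps)
  show "1 / p < 1" using p0 by simp
  show "0 < 1 / (N / \<alpha>)" using N al by simp
qed

lemma hd_inf:
  fixes M a b N \<delta> :: real
  assumes M: "1 \<le> M" and ab: "b - a = \<delta> / N" "0 < \<delta>" "0 < N" "b - a \<le> 1"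
  shows "M powr (b - a) / (b - a) \<le> M * max 1 N * \<delta> powr (- 1)"
proof -
  have "M powr (b - a) \<le> M powr 1" using M ab by (intro powr_mono) auto
  then have "M powr (b - a) \<le> M" using M by simp
  then have "M powr (b - a) * (N / \<delta>) \<le> M * (max 1 N / \<delta>)"
    using ab M by (intro mult_mono divide_right_mono) auto
  moreover have "M powr (b - a) / (b - a) = M powr (b - a) * (N / \<delta>)" using ab by simp
  moreover have "\<delta> powr (- 1) = 1 / \<delta>"
    using ab by (simp add: powr_minus_divide)
  ultimately show ?thesis by simp
qed

lemma hd_fin:
  fixes M a b N \<delta> qr :: real
  assumes M: "1 \<le> M" and ab: "b - a = \<delta> / N" "0 < \<delta>" "0 < N" "b - a \<le> 1" and q: "1 < qr"
  shows "(M powr ((b - a) * (qr / (qr - 1))) / ((b - a) * (qr / (qr - 1)))) powr (1 - 1 / qr)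
    \<le> M * max 1 N * \<delta> powr (- (1 - 1 / qr))"
proof -
  define qq where "qq = qr / (qr - 1)"
  define s where "s = 1 - 1 / qr"
  have qq: "1 < qq" "qq * s = 1" using q by (auto simp: qq_def s_def field_simps)
  have s: "0 < s" "s \<le> 1" using q by (auto simp: s_def)
  have "(M powr ((b - a) * qq) / ((b - a) * qq)) powr s
      = (M powr ((b - a) * qq)) powr s / ((b - a) * qq) powr s"
  proof -
    have h1: "0 \<le> M powr ((b - a) * qq)" by simp
    have h2: "0 \<le> (b - a) * qq" using ab qq by simp
    show ?thesis by (rule powr_divide)
  qed
  also have "(M powr ((b - a) * qq)) powr s = M powr (b - a)"
    using qq by (simp add: powr_powr mult.assoc)
  also have "(b - a) * qq = \<delta> * (qq / N)" using ab by simp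
  also have "(\<delta> * (qq / N)) powr s = \<delta> powr s * (qq / N) powr s"
    by (rule powr_mult)
  also have "M powr (b - a) / (\<delta> powr s * (qq / N) powr s) = M powr (b - a) * (N / qq) powr s * \<delta> powr (- s)"
    using ab qq by (simp add: powr_minus_divide powr_divide field_simps)
  also have "\<dots> \<le> M * max 1 N * \<delta> powr (- s)"
  proof -
    have "M powr (b - a) \<le> M powr 1" using M ab by (intro powr_mono) auto
    then have m: "M powr (b - a) \<le> M" using M by simp
    have "(N / qq) powr s \<le> max 1 (N / qq)" using ab qq s by (intro powr_le_max1) auto
    also have "\<dots> \<le> max 1 N"
    proof -
      have "N \<le> N * qq" using ab(3) qq(1) by simp
      then have "N / qq \<le> N" using qq(1) by (simp add: divide_le_eq)
      then show ?thesis by (simp add: max_def)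
    qed
    finally have "(N / qq) powr s \<le> max 1 N" .
    then show ?thesis using m M by (intro mult_right_mono mult_mono) auto
  qed
  finally have X: "(M powr (\<delta> * (qq / N)) / (\<delta> * (qq / N))) powr s \<le> M * max 1 N * \<delta> powr (- s)" .
  have e: "(b - a) * qq = \<delta> * (qq / N)" using ab by simp
  show ?thesis unfolding qq_def[symmetric] s_def[symmetric] e by (rule X)
qed


lemma combine:
  fixes Hd E T0 M N D Emax r \<delta> s :: real
  assumes Hd: "Hd \<le> M * max 1 N * \<delta> powr (- s)" and E: "0 \<le> E" "E \<le> Emax"
    and T0: "T0 \<le> M * ((r + 1) / (r - 1))" "0 \<le> T0"
    and d: "0 < \<delta>" "\<delta> powr s \<le> max 1 D" and M: "1 \<le> M" and r: "1 < r"
  shows "Hd + E * T0 \<le> M * max 1 D * (max 1 N + Emax * ((r + 1) / (r - 1))) * \<delta> powr (- s)"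
proof -
  define w where "w = max 1 D * \<delta> powr (- s)"
  have ds: "0 < \<delta> powr s" using d by simp
  have w: "1 \<le> w" unfolding w_def using d ds by (simp add: powr_minus_divide field_simps)
  have w0: "0 \<le> \<delta> powr (- s)" by simp
  have "Hd \<le> M * max 1 N * \<delta> powr (- s)" by fact
  also have "\<dots> \<le> M * max 1 N * (max 1 D * \<delta> powr (- s))"
    using M w0 by (intro mult_left_mono) (auto simp: mult_le_cancel_right1)
  finally have h1: "Hd \<le> M * max 1 N * w" by (simp add: w_def)
  have "E * T0 \<le> Emax * (M * ((r + 1) / (r - 1)))"
    using E T0 by (intro mult_mono) auto
  also have "\<dots> \<le> Emax * (M * ((r + 1) / (r - 1))) * w"
  proof -
    have X0: "0 \<le> Emax * (M * ((r + 1) / (r - 1)))" using E r M by auto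
    show ?thesis using mult_left_mono[OF w X0] by simp
  qed
  finally have h2: "E * T0 \<le> Emax * (M * ((r + 1) / (r - 1))) * w" .
  have "Hd + E * T0 \<le> M * max 1 N * w + Emax * (M * ((r + 1) / (r - 1))) * w"
    using h1 h2 by simp
  also have "\<dots> = M * max 1 D * (max 1 N + Emax * ((r + 1) / (r - 1))) * \<delta> powr (- s)"
    by (simp add: w_def algebra_simps)
  finally show ?thesis .
qed

lemma T0_bound:
  fixes M a b r :: real
  assumes M: "1 \<le> M" and ab: "a < b" "b - a \<le> 1" and b: "1 / (1 - b) \<le> (r + 1) / (r - 1)" "b < 1"
  shows "M powr (1 - a) * (M powr (- (1 - b)) / (1 - b)) \<le> M * ((r + 1) / (r - 1))"
    "0 \<le> M powr (1 - a) * (M powr (- (1 - b)) / (1 - b))"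
proof -
  have e: "M powr (1 - a) * (M powr (- (1 - b)) / (1 - b)) = M powr (b - a) * (1 / (1 - b))"
    by (simp add: powr_add[symmetric])
  have "M powr (b - a) \<le> M powr 1" using M ab by (intro powr_mono) auto
  then have m: "M powr (b - a) \<le> M" using M by simp
  show "M powr (1 - a) * (M powr (- (1 - b)) / (1 - b)) \<le> M * ((r + 1) / (r - 1))"
    unfolding e using m b M by (intro mult_mono) auto
  show "0 \<le> M powr (1 - a) * (M powr (- (1 - b)) / (1 - b))" using b by simp
qed


theorem lemma3p2:
  fixes \<Omega> :: "'a::euclidean_space set" and \<alpha> :: real and q :: ennreal
  assumes "open \<Omega>" and "bounded \<Omega>"
    and "0 < \<alpha>" and "\<alpha> < real DIM('a)"
    and "1 < q"
  shows "\<exists>C1>0.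
     (\<forall>p f. in_lorentz (real DIM('a) / \<alpha>) q \<Omega> f
        \<longrightarrow> (real DIM('a) / \<alpha> + 1) / 2 \<le> p \<longrightarrow> p < real DIM('a) / \<alpha>
        \<longrightarrow> in_lorentz p 1 \<Omega> f
          \<and> lorentz_norm_on p 1 \<Omega> f
              \<le> ennreal (C1 * (real DIM('a) / p - \<alpha>) powr (- inv_conj q))
                 * lorentz_norm_on (real DIM('a) / \<alpha>) q \<Omega> f)
   \<and> (\<forall>p. (real DIM('a) / \<alpha> + 1) / 2 \<le> p \<longrightarrow> p < real DIM('a) / \<alpha>
        \<longrightarrow> 1 \<le> C1 * (real DIM('a) / p - \<alpha>) powr (- inv_conj q))"
proof -
  define N where "N = real DIM('a)"
  define r where "r = N / \<alpha>"
  define a where "a = 1 / r"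
  define D where "D = N / ((r + 1) / 2) - \<alpha>"
  define Emax where "Emax = max 1 (a * enn2real q)"
  define M where "M = max 1 (measure lebesgue \<Omega>)"
  define C where "C = M * max 1 D * (max 1 N + Emax * ((r + 1) / (r - 1)))"
  define s where "s = inv_conj q"
  have N: "0 < N" by (simp add: N_def)
  have al: "0 < \<alpha>" "\<alpha> < N" using assms by (auto simp: N_def)
  have r1: "1 < r" using al by (simp add: r_def)
  have a0: "0 < a" using r1 by (simp add: a_def)
  have M1: "1 \<le> M" by (simp add: M_def)
  have Emax1: "1 \<le> Emax" by (simp add: Emax_def)
  have qr1: "1 < enn2real q" if "q \<noteq> \<infinity>"
  proof -
    have "q = ennreal (enn2real q)" using that by (simp add: less_top)
    then show ?thesis using \<open>1 < q\<close> by (metis one_less_ennreal)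
  qed
  have s': "0 < s \<and> s \<le> 1"
  proof (cases "q = \<infinity>")
    case True then show ?thesis by (auto simp: s_def inv_conj_def)
  next
    case False then show ?thesis using qr1[OF False] by (auto simp: s_def inv_conj_def)
  qed
  then have s: "0 < s" "s \<le> 1" by auto
  have Om: "\<Omega> \<in> lmeasurable" using assms(1,2) by (rule lmeasurable_open[rotated])
  have OmL: "\<Omega> \<in> sets lebesgue" using Om by (rule fmeasurableD)
  have OmM: "emeasure lebesgue \<Omega> \<le> ennreal M"
    using emeasure_eq_measure2[OF Om] by (simp add: M_def)
  have zero: "rearr (\<lambda>x. f x * indicator \<Omega> x) t = 0" if "M \<le> t" for f t
    by (rule rearr_zero[OF _ OmL OmM that]) (auto simp: indicator_def)
  have br: "1 \<le> max 1 N + Emax * ((r + 1) / (r - 1))" using Emax1 r1 by (simp add: add_increasing2)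
  have C0: "max 1 D \<le> C"
  proof -
    have "max 1 D * 1 \<le> M * max 1 D * (max 1 N + Emax * ((r + 1) / (r - 1)))"
      using M1 br by (intro mult_mono) (auto simp: mult_le_cancel_right1)
    then show ?thesis by (simp add: C_def)
  qed
  have main: "\<exists>C1>0. (\<forall>p f. in_lorentz r q \<Omega> f \<longrightarrow> (r + 1) / 2 \<le> p \<longrightarrow> p < r
      \<longrightarrow> in_lorentz p 1 \<Omega> f \<and> lorentz_norm_on p 1 \<Omega> f
          \<le> ennreal (C1 * (N / p - \<alpha>) powr (- s)) * lorentz_norm_on r q \<Omega> f)
    \<and> (\<forall>p. (r + 1) / 2 \<le> p \<longrightarrow> p < r \<longrightarrow> 1 \<le> C1 * (N / p - \<alpha>) powr (- s))"
  proof (intro exI[of _ C] conjI)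
    show "0 < C" using C0 by linarith
  next
    show "\<forall>p f. in_lorentz r q \<Omega> f \<longrightarrow> (r + 1) / 2 \<le> p \<longrightarrow> p < r
      \<longrightarrow> in_lorentz p 1 \<Omega> f \<and> lorentz_norm_on p 1 \<Omega> f
          \<le> ennreal (C * (N / p - \<alpha>) powr (- s)) * lorentz_norm_on r q \<Omega> f"
    proof (intro allI impI)
    fix p f assume hyp: "in_lorentz r q \<Omega> f" and p1: "(r + 1) / 2 \<le> p" and p2: "p < r"
    define g where "g = (\<lambda>x. f x * indicator \<Omega> x)"
    have gm: "g \<in> borel_measurable lebesgue" and fin: "lorentz_norm r q g < \<infinity>"
      using hyp by (auto simp: in_lorentz_def lorentz_norm_on_def g_def)
    define \<phi> where "\<phi> = (\<lambda>t. enn2real (maxrearr g t))"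
    have \<phi>m: "\<phi> \<in> borel_measurable borel"
      unfolding \<phi>_def using maxrearr_meas[of g] by measurable
    have \<phi>nn: "\<And>t. 0 \<le> \<phi> t" by (simp add: \<phi>_def)
    have \<phi>anti: "\<phi> t \<le> \<phi> s" if "0 < s" "s \<le> t" for s t
    proof -
      have "maxrearr g t \<le> maxrearr g s" using that by (rule maxrearr_antimono)
      moreover have "maxrearr g s < \<infinity>" using F_fin[OF fin that(1)] .
      ultimately show ?thesis unfolding \<phi>_def by (intro enn2real_mono) auto
    qed
    have \<phi>tl: "\<phi> t * t = \<phi> M * M" if "M \<le> t" for t
    proof -
      have M0: "0 < M" using M1 by simp
      have "maxrearr g t * ennreal t = maxrearr g M * ennreal M"
        by (rule maxrearr_tail[OF _ M0 that]) (simp add: g_def zero)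
      moreover have "maxrearr g t = ennreal (\<phi> t)" "maxrearr g M = ennreal (\<phi> M)"
        using F_eq[OF fin, of t] F_eq[OF fin, of M] M0 that by (auto simp: \<phi>_def)
      ultimately have "ennreal (\<phi> t * t) = ennreal (\<phi> M * M)"
        using M0 that \<phi>nn by (simp add: ennreal_mult)
      then show ?thesis using M0 that \<phi>nn by simp
    qed
    define b where "b = 1 / p"
    define \<delta> where "\<delta> = N / p - \<alpha>"
    note bf = basic_facts[OF N al p1[unfolded r_def] p2[unfolded r_def]]
    have d: "0 < \<delta>" "\<delta> \<le> D" using bf by (auto simp: D_def r_def \<delta>_def)
    have ba0: "b - a = \<delta> / N" "a < b" "b < 1" "1 / (1 - b) \<le> (r + 1) / (r - 1)"
      using bf a0 by (auto simp: a_def b_def \<delta>_def r_def)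
    have ba: "b - a = \<delta> / N" "a < b" "b < 1" "b - a \<le> 1" "1 / (1 - b) \<le> (r + 1) / (r - 1)"
      using ba0 a0 by auto
    have ds: "\<delta> powr s \<le> max 1 D"
    proof -
      have "\<delta> powr s \<le> max 1 \<delta>" using d s by (intro powr_le_max1) auto
      then show ?thesis using d by auto
    qed
    have T0: "M powr (1 - a) * (M powr (- (1 - b)) / (1 - b)) \<le> M * ((r + 1) / (r - 1))"
      "0 \<le> M powr (1 - a) * (M powr (- (1 - b)) / (1 - b))"
      using T0_bound[OF M1 ba(2) ba(4) ba(5) ba(3)] by auto
    define J where "J = (\<integral>\<^sup>+t. ennreal (if 0 < t then t powr (b - 1) * \<phi> t else 0) \<partial>lborel)"
    define hd where "hd = (\<integral>\<^sup>+t. ennreal (if t \<in> {0<..M} then t powr (b - 1) * \<phi> t else 0) \<partial>lborel)"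
    have n1: "lorentz_norm p 1 g = enn_powr J 1"
      unfolding J_def \<phi>_def b_def by (rule norm_conv_1[OF fin])
    have key: "\<exists>Qr\<ge>0. lorentz_norm r q g = ennreal Qr \<and> J \<le> ennreal (C * \<delta> powr (- s) * Qr)"
    proof (cases "q = \<infinity>")
      case True
      define Qr where "Qr = enn2real (lorentz_norm r q g)"
      have nQ: "lorentz_norm r q g = ennreal Qr" using fin by (simp add: Qr_def)
      have Qr0: "0 \<le> Qr" by (simp add: Qr_def)
      have emb: "t powr a * \<phi> t \<le> Qr" if "0 < t" for t
        using norm_conv_inf[of r g t] fin True that unfolding Qr_def \<phi>_def a_def by auto
      have sv: "s = 1" using True by (simp add: s_def inv_conj_def)
      have J1: "J \<le> hd + ennreal (Qr * M powr (1 - a) * (M powr (- (1 - b)) / (1 - b)))"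
        unfolding J_def hd_def using M1 ba by (intro tail_split[OF \<phi>m \<phi>nn _ \<phi>tl emb]) auto
      have J2: "hd \<le> ennreal (Qr * (M powr (b - a) / (b - a)))"
        unfolding hd_def using M1 ba by (intro head_inf[OF \<phi>nn _ emb]) auto
      have hdb: "M powr (b - a) / (b - a) \<le> M * max 1 N * \<delta> powr (- s)"
        unfolding sv using hd_inf[OF M1 ba(1) d(1) N ba(4)] .
      have cmb: "M powr (b - a) / (b - a) + 1 * (M powr (1 - a) * (M powr (- (1 - b)) / (1 - b)))
          \<le> C * \<delta> powr (- s)"
        unfolding C_def using combine[OF hdb _ Emax1 T0 d(1) ds M1 r1] by simp
      have "J \<le> ennreal (Qr * (M powr (b - a) / (b - a))) + ennreal (Qr * (M powr (1 - a) * (M powr (- (1 - b)) / (1 - b))))"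
        using J1 J2 by (metis add_right_mono mult.assoc order_trans)
      also have "\<dots> = ennreal (Qr * (M powr (b - a) / (b - a)) + Qr * (M powr (1 - a) * (M powr (- (1 - b)) / (1 - b))))"
      proof -
        have h1: "0 \<le> Qr * (M powr (b - a) / (b - a))" using Qr0 ba(2) by simp
        have h2: "0 \<le> Qr * (M powr (1 - a) * (M powr (- (1 - b)) / (1 - b)))" using mult_nonneg_nonneg[OF Qr0 T0(2)] .
        show ?thesis by (rule ennreal_plus[OF h1 h2, symmetric])
      qed
      also have "\<dots> = ennreal (Qr * (M powr (b - a) / (b - a) + 1 * (M powr (1 - a) * (M powr (- (1 - b)) / (1 - b)))))"
        by (simp only: distrib_left mult_1_left)
      also have "\<dots> \<le> ennreal (C * \<delta> powr (- s) * Qr)"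
        using cmb Qr0 by (intro ennreal_leI) (simp add: mult_left_mono mult.commute)
      finally show ?thesis using nQ Qr0 by blast
    next
      case False
      define qr where "qr = enn2real q"
      have q1: "1 < qr" using qr1[OF False] by (simp add: qr_def)
      have sv: "s = 1 - 1 / qr" using False by (simp add: s_def inv_conj_def qr_def)
      define I where "I = (\<integral>\<^sup>+t. ennreal (if 0 < t then (t powr (1 / r) * enn2real (maxrearr g t)) powr qr / t else 0) \<partial>lborel)"
      have nI: "lorentz_norm r q g = enn_powr I (1 / qr)"
        unfolding I_def qr_def by (rule norm_conv_fin[OF fin False])
      have If: "I < \<infinity>"
      proof (rule ccontr)
        assume "\<not> I < \<infinity>"
        then have "I = top" by (simp add: less_top[symmetric])
        then show False using nI fin by (simp add: enn_powr_top)
      qed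
      define Vr where "Vr = enn2real I"
      have IV: "I = ennreal Vr" using If by (simp add: Vr_def)
      have Vr0: "0 \<le> Vr" by (simp add: Vr_def)
      define Qr where "Qr = Vr powr (1 / qr)"
      have Qr0: "0 \<le> Qr" by (simp add: Qr_def)
      have nQ: "lorentz_norm r q g = ennreal Qr" using nI IV Vr0 by (simp add: enn_powr_ennreal Qr_def)
      have V: "(\<integral>\<^sup>+t. ennreal (if 0 < t then (t powr a * \<phi> t) powr qr / t else 0) \<partial>lborel) = ennreal Vr"
        using IV unfolding I_def \<phi>_def a_def .
      define E where "E = (a * qr) powr (1 / qr)"
      have emb: "t powr a * \<phi> t \<le> E * Qr" if "0 < t" for t
        using embed_fin[OF \<phi>nn \<phi>anti a0 q1 V Vr0 that] by (simp add: E_def Qr_def)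
      have E: "0 \<le> E" "E \<le> Emax"
      proof -
        show "0 \<le> E" by (simp add: E_def)
        have "E \<le> max 1 (a * qr)" unfolding E_def using a0 q1 by (intro powr_le_max1) auto
        then show "E \<le> Emax" by (simp add: Emax_def qr_def)
      qed
      show ?thesis
      proof (cases "Vr = 0")
        case True
        then have Q0: "Qr = 0" by (simp add: Qr_def)
        have z: "\<phi> t = 0" if "0 < t" for t
        proof -
          have "t powr a * \<phi> t \<le> 0" using emb[OF that] Q0 by simp
          moreover have "0 < t powr a" using that by simp
          ultimately show ?thesis using \<phi>nn[of t] by (simp add: mult_le_0_iff)
        qed
        have "(\<lambda>t. ennreal (if 0 < t then t powr (b - 1) * \<phi> t else 0)) = (\<lambda>t. 0)"
          by (auto simp: z fun_eq_iff)
        then have "J = 0" unfolding J_def by simp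
        then show ?thesis using nQ Q0 by auto
      next
        case False
        then have Vp: "0 < Vr" using Vr0 by simp
        define Hd where "Hd = (M powr ((b - a) * (qr / (qr - 1))) / ((b - a) * (qr / (qr - 1)))) powr (1 - 1 / qr)"
        have J1: "J \<le> hd + ennreal (E * Qr * M powr (1 - a) * (M powr (- (1 - b)) / (1 - b)))"
          unfolding J_def hd_def using M1 ba by (intro tail_split[OF \<phi>m \<phi>nn _ \<phi>tl emb]) auto
        have J2: "hd \<le> ennreal (Hd * Qr)"
          unfolding hd_def Hd_def Qr_def using M1 ba by (intro head_fin[OF \<phi>m \<phi>nn _ _ q1 V Vp]) auto
        have hdb: "Hd \<le> M * max 1 N * \<delta> powr (- s)"
          unfolding sv Hd_def using hd_fin[OF M1 ba(1) d(1) N ba(4) q1] .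
        have Hd0: "0 \<le> Hd" by (simp add: Hd_def)
        have cmb: "Hd + E * (M powr (1 - a) * (M powr (- (1 - b)) / (1 - b))) \<le> C * \<delta> powr (- s)"
          unfolding C_def using combine[OF hdb E T0 d(1) ds M1 r1] by simp
        have "J \<le> ennreal (Hd * Qr) + ennreal (E * Qr * M powr (1 - a) * (M powr (- (1 - b)) / (1 - b)))"
          using J1 J2 by (metis add_right_mono order_trans)
        also have "\<dots> = ennreal (Hd * Qr + E * Qr * M powr (1 - a) * (M powr (- (1 - b)) / (1 - b)))"
        proof -
          have h1: "0 \<le> Hd * Qr" using Qr0 Hd0 by simp
          have h2: "0 \<le> E * Qr * M powr (1 - a) * (M powr (- (1 - b)) / (1 - b))"
            using mult_nonneg_nonneg[OF mult_nonneg_nonneg[OF E(1) Qr0] T0(2)] by (simp only: mult.assoc)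
          show ?thesis by (rule ennreal_plus[OF h1 h2, symmetric])
        qed
        also have "\<dots> = ennreal ((Hd + E * (M powr (1 - a) * (M powr (- (1 - b)) / (1 - b)))) * Qr)"
          by (simp add: algebra_simps)
        also have "\<dots> \<le> ennreal (C * \<delta> powr (- s) * Qr)"
          using cmb Qr0 by (intro ennreal_leI mult_right_mono) auto
        finally show ?thesis using nQ Qr0 by blast
      qed
    qed
    then obtain Qr where Qr: "0 \<le> Qr" "lorentz_norm r q g = ennreal Qr" "J \<le> ennreal (C * \<delta> powr (- s) * Qr)"
      by blast
    have Jf: "J < \<infinity>" using Qr(3) by (simp add: le_less_trans)
    have JJ: "enn_powr J 1 = J"
    proof -
      have "J = ennreal (enn2real J)" using Jf by simp
      then show ?thesis by (metis enn2real_nonneg enn_powr_ennreal powr_one)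
    qed
    have C0': "0 \<le> C * \<delta> powr (- s)" using C0 by (auto intro: order_trans[OF _ C0])
    have n1': "lorentz_norm p 1 g = J" using n1 JJ by simp
    show "in_lorentz p 1 \<Omega> f \<and> lorentz_norm_on p 1 \<Omega> f
          \<le> ennreal (C * (N / p - \<alpha>) powr (- s)) * lorentz_norm_on r q \<Omega> f"
      unfolding in_lorentz_def lorentz_norm_on_def g_def[symmetric] \<delta>_def[symmetric]
      using gm Jf n1' Qr C0' by (simp add: ennreal_mult[symmetric])
    qed
  next
    show "\<forall>p. (r + 1) / 2 \<le> p \<longrightarrow> p < r \<longrightarrow> 1 \<le> C * (N / p - \<alpha>) powr (- s)"
    proof (intro allI impI)
    fix p assume p1: "(r + 1) / 2 \<le> p" and p2: "p < r"
    note bf = basic_facts[OF N al p1[unfolded r_def] p2[unfolded r_def]]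
    have d: "0 < N / p - \<alpha>" "N / p - \<alpha> \<le> D" using bf by (auto simp: D_def r_def)
    have "(N / p - \<alpha>) powr s \<le> max 1 (N / p - \<alpha>)" using d s by (intro powr_le_max1) auto
    also have "\<dots> \<le> C" using d C0 by auto
    finally have "(N / p - \<alpha>) powr s \<le> C" .
    moreover have "0 < (N / p - \<alpha>) powr s" using d by simp
    ultimately show "1 \<le> C * (N / p - \<alpha>) powr (- s)"
      by (simp add: powr_minus_divide)
    qed
  qed
  then show ?thesis by (simp only: r_def N_def s_def)
qed

end
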